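(* Let $(\Delta,U,\mu_\Delta)$ be an expanding Young tower with $\mu_\Delta(\Delta_n)=O(\rho^n)$ for some $\rho<1$, and let $\tau<1$. There exist $C>0$ and $\theta<1$ such that for all $n\in\mathbb N$, $$\int_{U^{-n}\Delta_0}\tau^{\Psi_n}\,d\mu_\Delta\le C\theta^n.$$
   Context: Expanding Young tower: probability space $(\Delta,\mu_\Delta)$, measure-preserving $U$, partition $\{\Delta_{k,p}\}_{0\le k<r_p}$ with $U:\Delta_{k,p}\to\Delta_{k+1,p}$ and $U:\Delta_{r_p-1,p}\to\Delta_0=\bigcup_m\Delta_{0,m}$ measurable isomorphisms, and bounded distortion $|1-J(x)/J(y)|\le C\beta^{s(Ux,Uy)}$ for the inverse Jacobian $J$ of $U$ and $x,y$ in a common partition element ($s$ the separation time counted in returns to the basis). $\Delta_n=\bigcup_p\Delta_{n,p}$. $\Psi_n(x)=\#\{1\le k\le n: U^kx\in\Delta_0\}$ is the number of returns to the basis between times $1$ and $n$. *)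

theory Defs
  imports "HOL-Probability.Probability" "HOL-Library.Landau_Symbols"
begin

text \<open>Tower partition: index set P of columns, heights r p \<ge> 1, pieces D k p
  (level k of column p) for k < r p.\<close>

definition valid_piece :: "nat set \<Rightarrow> (nat \<Rightarrow> nat) \<Rightarrow> nat \<Rightarrow> nat \<Rightarrow> bool" where
  "valid_piece P r k p \<longleftrightarrow> p \<in> P \<and> k < r p"

definition tower_level :: "nat set \<Rightarrow> (nat \<Rightarrow> nat) \<Rightarrow> (nat \<Rightarrow> nat \<Rightarrow> 'a set) \<Rightarrow> nat \<Rightarrow> 'a set" where
  "tower_level P r D n = (\<Union>p\<in>{p\<in>P. n < r p}. D n p)"

definition same_piece :: "nat set \<Rightarrow> (nat \<Rightarrow> nat) \<Rightarrow> (nat \<Rightarrow> nat \<Rightarrow> 'a set) \<Rightarrow> 'a \<Rightarrow> 'a \<Rightarrow> bool" where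
  "same_piece P r D x y \<longleftrightarrow> (\<exists>k p. valid_piece P r k p \<and> x \<in> D k p \<and> y \<in> D k p)"

definition visits_before :: "('a \<Rightarrow> 'a) \<Rightarrow> 'a set \<Rightarrow> 'a \<Rightarrow> nat \<Rightarrow> nat" where
  "visits_before U B x j = card {i. i < j \<and> (U ^^ i) x \<in> B}"

text \<open>Separation time counted in returns to the base: s(x,y) is the number of visits of
  x to the base strictly before the first time the orbits of x and y lie in different
  partition elements (infinity if they never separate).\<close>
definition sep_time :: "nat set \<Rightarrow> (nat \<Rightarrow> nat) \<Rightarrow> (nat \<Rightarrow> nat \<Rightarrow> 'a set) \<Rightarrow> ('a \<Rightarrow> 'a) \<Rightarrow> 'a \<Rightarrow> 'a \<Rightarrow> enat" where
  "sep_time P r D U x y = Sup {enat n | n. \<forall>j. visits_before U (tower_level P r D 0) x j < n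
        \<longrightarrow> same_piece P r D ((U ^^ j) x) ((U ^^ j) y)}"

definition meas_iso_on :: "'a measure \<Rightarrow> ('a \<Rightarrow> 'a) \<Rightarrow> 'a set \<Rightarrow> 'a set \<Rightarrow> bool" where
  "meas_iso_on M U A B \<longleftrightarrow> bij_betw U A B \<and>
     (\<forall>S. S \<subseteq> A \<longrightarrow> (S \<in> sets M \<longleftrightarrow> U ` S \<in> sets M))"

definition expanding_young_tower ::
  "'a measure \<Rightarrow> ('a \<Rightarrow> 'a) \<Rightarrow> nat set \<Rightarrow> (nat \<Rightarrow> nat) \<Rightarrow> (nat \<Rightarrow> nat \<Rightarrow> 'a set)
    \<Rightarrow> ('a \<Rightarrow> real) \<Rightarrow> real \<Rightarrow> real \<Rightarrow> bool" where
  "expanding_young_tower M U P r D J Cd \<beta> \<longleftrightarrow>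
     prob_space M \<and> U \<in> M \<rightarrow>\<^sub>M M \<and> distr M M U = M \<and>
     countable P \<and> (\<forall>p\<in>P. 1 \<le> r p) \<and>
     (\<forall>k p. valid_piece P r k p \<longrightarrow> D k p \<in> sets M) \<and>
     (\<forall>k p k' p'. valid_piece P r k p \<and> valid_piece P r k' p' \<and> (k, p) \<noteq> (k', p')
        \<longrightarrow> D k p \<inter> D k' p' = {}) \<and>
     (\<Union>(k, p)\<in>{(k, p). valid_piece P r k p}. D k p) = space M \<and>
     (\<forall>k p. valid_piece P r (Suc k) p \<longrightarrow> meas_iso_on M U (D k p) (D (Suc k) p)) \<and>
     (\<forall>p\<in>P. meas_iso_on M U (D (r p - 1) p) (tower_level P r D 0)) \<and>
     J \<in> borel_measurable M \<and> (\<forall>x\<in>space M. 0 < J x) \<and>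
     (\<forall>k p A. valid_piece P r k p \<and> A \<subseteq> D k p \<and> A \<in> sets M \<longrightarrow>
        emeasure M (U ` A) = (\<integral>\<^sup>+ x\<in>A. ennreal (1 / J x) \<partial>M)) \<and>
     0 < \<beta> \<and> \<beta> < 1 \<and>
     (\<forall>k p x y. valid_piece P r k p \<and> x \<in> D k p \<and> y \<in> D k p \<longrightarrow>
        (\<forall>n. enat n \<le> sep_time P r D U (U x) (U y) \<longrightarrow> \<bar>1 - J x / J y\<bar> \<le> Cd * \<beta> ^ n))"

definition Psi :: "('a \<Rightarrow> 'a) \<Rightarrow> 'a set \<Rightarrow> nat \<Rightarrow> 'a \<Rightarrow> nat" where
  "Psi U B n x = card {k \<in> {1..n}. (U ^^ k) x \<in> B}"

end

theory Submission
  imports Defs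
begin


locale yt =
  fixes M :: "'a measure" and U :: "'a \<Rightarrow> 'a" and P :: "nat set" and r :: "nat \<Rightarrow> nat"
    and D :: "nat \<Rightarrow> nat \<Rightarrow> 'a set" and J :: "'a \<Rightarrow> real" and Cd \<beta> :: real
  assumes tower: "expanding_young_tower M U P r D J Cd \<beta>"
begin

abbreviation "B0 \<equiv> tower_level P r D 0"
abbreviation "lev n \<equiv> tower_level P r D n"
definition "tops Q = (\<Union>p\<in>Q. D (r p - 1) p)"

lemma ps: "prob_space M" using tower unfolding expanding_young_tower_def by (elim conjE) assumption
lemma Umeas: "U \<in> M \<rightarrow>\<^sub>M M" using tower unfolding expanding_young_tower_def by (elim conjE) assumption
lemma Udistr: "distr M M U = M" using tower unfolding expanding_young_tower_def by (elim conjE) assumption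
lemma cntP: "countable P" using tower unfolding expanding_young_tower_def by (elim conjE) assumption
lemma r1all: "\<forall>p\<in>P. 1 \<le> r p" using tower unfolding expanding_young_tower_def by (elim conjE) assumption
lemma r1: "p \<in> P \<Longrightarrow> 1 \<le> r p" using r1all by (rule bspec)
lemma Dsetsall: "\<forall>k p. valid_piece P r k p \<longrightarrow> D k p \<in> sets M"
  using tower unfolding expanding_young_tower_def by (elim conjE) assumption
lemma Dsets: "valid_piece P r k p \<Longrightarrow> D k p \<in> sets M"
  using Dsetsall by simp
lemma Ddisjall: "\<forall>k p k' p'. valid_piece P r k p \<and> valid_piece P r k' p' \<and> (k, p) \<noteq> (k', p')
        \<longrightarrow> D k p \<inter> D k' p' = {}"
  using tower unfolding expanding_young_tower_def by (elim conjE) assumption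
lemma Ddisj: "valid_piece P r k p \<Longrightarrow> valid_piece P r k' p' \<Longrightarrow> (k, p) \<noteq> (k', p') \<Longrightarrow> D k p \<inter> D k' p' = {}"
  using Ddisjall by blast
lemma cover: "(\<Union>(k, p)\<in>{(k, p). valid_piece P r k p}. D k p) = space M"
  using tower unfolding expanding_young_tower_def by (elim conjE) assumption
lemma iso_stepall: "\<forall>k p. valid_piece P r (Suc k) p \<longrightarrow> meas_iso_on M U (D k p) (D (Suc k) p)"
  using tower unfolding expanding_young_tower_def by (elim conjE) assumption
lemma iso_step: "valid_piece P r (Suc k) p \<Longrightarrow> meas_iso_on M U (D k p) (D (Suc k) p)"
  using iso_stepall by blast
lemma iso_topall: "\<forall>p\<in>P. meas_iso_on M U (D (r p - 1) p) B0"
  using tower unfolding expanding_young_tower_def by (elim conjE) assumption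
lemma iso_top: "p \<in> P \<Longrightarrow> meas_iso_on M U (D (r p - 1) p) B0"
  using iso_topall by (rule bspec)
lemma Jmeas: "J \<in> borel_measurable M"
  using tower unfolding expanding_young_tower_def by (elim conjE) assumption
lemma Jposall: "\<forall>x\<in>space M. 0 < J x"
  using tower unfolding expanding_young_tower_def by (elim conjE) assumption
lemma Jpos: "x \<in> space M \<Longrightarrow> 0 < J x"
  using Jposall by (rule bspec)
lemma jacall: "\<forall>k p A. valid_piece P r k p \<and> A \<subseteq> D k p \<and> A \<in> sets M \<longrightarrow>
        emeasure M (U ` A) = (\<integral>\<^sup>+ x\<in>A. ennreal (1 / J x) \<partial>M)"
  using tower unfolding expanding_young_tower_def by (elim conjE) assumption
lemma jac: "valid_piece P r k p \<Longrightarrow> A \<subseteq> D k p \<Longrightarrow> A \<in> sets M \<Longrightarrow>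
        emeasure M (U ` A) = (\<integral>\<^sup>+ x\<in>A. ennreal (1 / J x) \<partial>M)"
  using jacall by blast
lemma distall: "\<forall>k p x y. valid_piece P r k p \<and> x \<in> D k p \<and> y \<in> D k p \<longrightarrow>
        (\<forall>n. enat n \<le> sep_time P r D U (U x) (U y) \<longrightarrow> \<bar>1 - J x / J y\<bar> \<le> Cd * \<beta> ^ n)"
  using tower unfolding expanding_young_tower_def by (elim conjE) assumption
lemma dist0: "valid_piece P r k p \<Longrightarrow> x \<in> D k p \<Longrightarrow> y \<in> D k p \<Longrightarrow> \<bar>1 - J x / J y\<bar> \<le> Cd"
proof -
  assume a: "valid_piece P r k p" "x \<in> D k p" "y \<in> D k p"
  have "\<forall>n. enat n \<le> sep_time P r D U (U x) (U y) \<longrightarrow> \<bar>1 - J x / J y\<bar> \<le> Cd * \<beta> ^ n"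
    using distall a by blast
  from spec[OF this, of 0] show ?thesis by (simp add: zero_enat_def[symmetric])
qed

lemma cover': "x \<in> space M \<longleftrightarrow> (\<exists>k p. valid_piece P r k p \<and> x \<in> D k p)"
proof -
  have "x \<in> space M \<longleftrightarrow> x \<in> (\<Union>(k, p)\<in>{(k, p). valid_piece P r k p}. D k p)"
    using cover by simp
  also have "\<dots> \<longleftrightarrow> (\<exists>k p. valid_piece P r k p \<and> x \<in> D k p)" by auto
  finally show ?thesis .
qed
lemma Dsub: "valid_piece P r k p \<Longrightarrow> D k p \<subseteq> space M"
  using cover' by blast
lemma inpiece: "x \<in> space M \<Longrightarrow> \<exists>k p. valid_piece P r k p \<and> x \<in> D k p"
  using cover' by blast

lemma lev_sets: "lev n \<in> sets M"
  unfolding tower_level_def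
  by (rule sets.countable_UN') (auto intro!: Dsets countable_subset[OF _ cntP] simp: valid_piece_def)

lemma lev_sub: "lev n \<subseteq> space M"
  unfolding tower_level_def
proof (rule UN_least)
  fix p assume "p \<in> {p \<in> P. n < r p}"
  then have "valid_piece P r n p" by (simp add: valid_piece_def)
  then show "D n p \<subseteq> space M" by (rule Dsub)
qed

lemma valid_top: "p \<in> P \<Longrightarrow> valid_piece P r (r p - 1) p"
  using r1[of p] by (simp add: valid_piece_def)

lemma top_sets: "Q \<subseteq> P \<Longrightarrow> tops Q \<in> sets M"
  unfolding tops_def
  by (rule sets.countable_UN') (use valid_top in \<open>auto intro!: Dsets countable_subset[OF _ cntP]\<close>)

lemma top_sub: "Q \<subseteq> P \<Longrightarrow> tops Q \<subseteq> space M"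
proof -
  assume q: "Q \<subseteq> P"
  show ?thesis unfolding tops_def
  proof (rule UN_least)
    fix p assume "p \<in> Q"
    then show "D (r p - 1) p \<subseteq> space M" using Dsub[OF valid_top, of p] q by auto
  qed
qed

lemma bij_step: "valid_piece P r (Suc k) p \<Longrightarrow> bij_betw U (D k p) (D (Suc k) p)"
proof -
  assume v: "valid_piece P r (Suc k) p"
  from iso_step[OF v] show ?thesis unfolding meas_iso_on_def by (rule conjunct1)
qed
lemma bij_top: "p \<in> P \<Longrightarrow> bij_betw U (D (r p - 1) p) B0"
proof -
  assume v: "p \<in> P"
  from iso_top[OF v] show ?thesis unfolding meas_iso_on_def by (rule conjunct1)
qed
lemma iso_sets: "meas_iso_on M U A B \<Longrightarrow> S \<subseteq> A \<Longrightarrow> U ` S \<in> sets M \<Longrightarrow> S \<in> sets M"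
  unfolding meas_iso_on_def by blast
lemma forward: "valid_piece P r (Suc k) p \<Longrightarrow> x \<in> D k p \<Longrightarrow> U x \<in> D (Suc k) p"
  using bij_step[of k p] bij_betwE by blast

lemma forward_top: "p \<in> P \<Longrightarrow> x \<in> D (r p - 1) p \<Longrightarrow> U x \<in> B0"
  using bij_top[of p] bij_betwE by blast

lemma not_base: "valid_piece P r (Suc k) p \<Longrightarrow> x \<in> D (Suc k) p \<Longrightarrow> x \<notin> B0"
proof
  assume a: "valid_piece P r (Suc k) p" "x \<in> D (Suc k) p" "x \<in> B0"
  from a(3) obtain p' where p': "p' \<in> P" "0 < r p'" "x \<in> D 0 p'" unfolding tower_level_def by blast
  have v0: "valid_piece P r 0 p'" using p' by (simp add: valid_piece_def)
  have ne: "(Suc k, p) \<noteq> (0, p')" by simp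
  have "D (Suc k) p \<inter> D 0 p' = {}" by (rule Ddisj[OF a(1) v0 ne])
  then show False using a(2) p'(3) by blast
qed

lemma back1: "w \<in> space M \<Longrightarrow> U w \<in> D (Suc k) p \<Longrightarrow> valid_piece P r (Suc k) p \<Longrightarrow> w \<in> D k p"
proof -
  assume a: "w \<in> space M" "U w \<in> D (Suc k) p" "valid_piece P r (Suc k) p"
  obtain k' p' where kp: "valid_piece P r k' p'" "w \<in> D k' p'" using inpiece[OF a(1)] by blast
  show ?thesis
  proof (cases "Suc k' < r p'")
    case True
    then have v: "valid_piece P r (Suc k') p'" using kp by (auto simp: valid_piece_def)
    have "U w \<in> D (Suc k') p'" using forward[OF v kp(2)] .
    have "(Suc k', p') = (Suc k, p)"
    proof (rule ccontr)
      assume "(Suc k', p') \<noteq> (Suc k, p)"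
      from Ddisj[OF v a(3) this] \<open>U w \<in> D (Suc k') p'\<close> a(2) show False by blast
    qed
    then show ?thesis using kp by simp
  next
    case False
    then have "k' = r p' - 1" using kp by (auto simp: valid_piece_def)
    moreover have "p' \<in> P" using kp by (simp add: valid_piece_def)
    ultimately have "U w \<in> B0" using forward_top[of p' w] kp(2) by simp
    then show ?thesis using not_base[OF a(3) a(2)] by blast
  qed
qed

lemma back_lev: "w \<in> space M \<Longrightarrow> U w \<in> lev (Suc k) \<Longrightarrow> w \<in> lev k"
proof -
  assume a: "w \<in> space M" "U w \<in> lev (Suc k)"
  then obtain p where "p \<in> P" "Suc k < r p" "U w \<in> D (Suc k) p" unfolding tower_level_def by auto
  then have v: "valid_piece P r (Suc k) p" by (simp add: valid_piece_def)
  have "w \<in> D k p" using back1[OF a(1) \<open>U w \<in> D (Suc k) p\<close> v] .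
  moreover have "k < r p" using \<open>Suc k < r p\<close> by simp
  ultimately show ?thesis using \<open>p \<in> P\<close> unfolding tower_level_def by auto
qed

lemma U_space: "x \<in> space M \<Longrightarrow> U x \<in> space M"
  using Umeas by (auto simp: measurable_def)

lemma Un_space: "x \<in> space M \<Longrightarrow> (U ^^ n) x \<in> space M"
  by (induction n) (auto simp: U_space)

lemma back_iter: "w \<in> space M \<Longrightarrow> (U ^^ i) w \<in> lev (k + i) \<Longrightarrow> w \<in> lev k"
proof (induction i arbitrary: w k)
  case 0 then show ?case by simp
next
  case (Suc i)
  have e: "(U ^^ Suc i) w = (U ^^ i) (U w)" by (metis comp_apply funpow_Suc_right)
  have "k + Suc i = Suc k + i" by simp
  then have "(U ^^ i) (U w) \<in> lev (Suc k + i)" using Suc.prems(2) e by simp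
  then have "U w \<in> lev (Suc k)" using Suc.IH[of "U w" "Suc k"] U_space[OF Suc.prems(1)] by simp
  then show ?case using back_lev[OF Suc.prems(1)] by simp
qed

lemma pre_top: "y \<in> space M \<Longrightarrow> U y \<in> B0 \<Longrightarrow> \<exists>p\<in>P. y \<in> D (r p - 1) p"
proof -
  assume a: "y \<in> space M" "U y \<in> B0"
  obtain k p where kp: "valid_piece P r k p" "y \<in> D k p" using inpiece[OF a(1)] by blast
  show ?thesis
  proof (cases "Suc k < r p")
    case True
    then have v: "valid_piece P r (Suc k) p" using kp by (auto simp: valid_piece_def)
    have "U y \<notin> B0" using not_base[OF v forward[OF v kp(2)]] .
    then show ?thesis using a(2) by simp
  next
    case False
    then have "k = r p - 1" using kp by (auto simp: valid_piece_def)
    moreover have "p \<in> P" using kp by (simp add: valid_piece_def)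
    ultimately show ?thesis using kp(2) by blast
  qed
qed

lemma mp1: "S \<in> sets M \<Longrightarrow> emeasure M (U -` S \<inter> space M) = emeasure M S"
  using emeasure_distr[OF Umeas, of S] Udistr by simp

lemma mpn: "S \<in> sets M \<Longrightarrow> emeasure M ((U ^^ n) -` S \<inter> space M) = emeasure M S"
proof (induction n)
  case 0 then show ?case by (simp add: Int_absorb2 sets.sets_into_space)
next
  case (Suc n)
  define X where "X = (U ^^ n) -` S \<inter> space M"
  have fs: "(U ^^ Suc n) = (U ^^ n) o U" by (rule funpow_Suc_right)
  have eq: "(U ^^ Suc n) -` S \<inter> space M = U -` X \<inter> space M"
    unfolding fs X_def using U_space by auto
  have meas: "X \<in> sets M"
    using measurable_compose_n[OF Umeas] Suc.prems unfolding X_def by (auto simp: measurable_def)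
  have "emeasure M ((U ^^ Suc n) -` S \<inter> space M) = emeasure M (U -` X \<inter> space M)"
    using eq by (simp only:)
  also have "\<dots> = emeasure M X" by (rule mp1[OF meas])
  also have "\<dots> = emeasure M S" unfolding X_def by (rule Suc.IH[OF Suc.prems])
  finally show ?case .
qed

end


context yt begin

declare Jmeas[measurable]

lemma emeq: "emeasure M X = ennreal (measure M X)"
proof -
  interpret prob_space M by (rule ps)
  show ?thesis by (rule emeasure_eq_measure)
qed

lemma mpn_m: "S \<in> sets M \<Longrightarrow> measure M ((U ^^ n) -` S \<inter> space M) = measure M S"
  using mpn[of S n] by (simp add: measure_def)

lemma pre_col: "valid_piece P r (Suc k) p \<Longrightarrow> U -` D (Suc k) p \<inter> space M = D k p"
proof -
  assume v: "valid_piece P r (Suc k) p"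
  have v0: "valid_piece P r k p" using v by (simp add: valid_piece_def)
  show ?thesis
  proof
    show "U -` D (Suc k) p \<inter> space M \<subseteq> D k p" using back1 v by blast
    show "D k p \<subseteq> U -` D (Suc k) p \<inter> space M" using forward[OF v] Dsub[OF v0] by blast
  qed
qed

lemma colmeas: "p \<in> P \<Longrightarrow> k < r p \<Longrightarrow> measure M (D k p) = measure M (D 0 p)"
proof (induction k)
  case 0 then show ?case by simp
next
  case (Suc k)
  have v: "valid_piece P r (Suc k) p" using Suc.prems by (simp add: valid_piece_def)
  have "measure M (D (Suc k) p) = measure M (U -` D (Suc k) p \<inter> space M)"
    using mpn_m[OF Dsets[OF v], of 1] by simp
  also have "\<dots> = measure M (D k p)" using pre_col[OF v] by simp
  also have "\<dots> = measure M (D 0 p)" using Suc by simp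
  finally show ?case .
qed

lemma Jratio: "valid_piece P r k p \<Longrightarrow> x \<in> D k p \<Longrightarrow> y \<in> D k p \<Longrightarrow> J x \<le> (1 + \<bar>Cd\<bar>) * J y"
proof -
  assume a: "valid_piece P r k p" "x \<in> D k p" "y \<in> D k p"
  have jy: "0 < J y" using Jpos Dsub[OF a(1)] a(3) by blast
  have "\<bar>1 - J x / J y\<bar> \<le> Cd" by (rule dist0[OF a])
  then have "J x / J y \<le> 1 + \<bar>Cd\<bar>" by linarith
  then show ?thesis using jy by (simp add: divide_le_eq)
qed

lemma jac_piece:
  assumes p: "p \<in> P" and B: "B \<in> sets M" "B \<subseteq> B0"
  shows "measure M (D (r p - 1) p \<inter> U -` B) * measure M B0
         \<le> (1 + \<bar>Cd\<bar>)^2 * measure M B * measure M (D (r p - 1) p)"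
proof -
  define T where "T = D (r p - 1) p"
  define A where "A = T \<inter> U -` B"
  define c where "c = \<bar>Cd\<bar>"
  have c0: "0 \<le> c" unfolding c_def by simp
  have v: "valid_piece P r (r p - 1) p" using valid_top[OF p] .
  have Tsets: "T \<in> sets M" unfolding T_def using Dsets[OF v] .
  have Tsub: "T \<subseteq> space M" unfolding T_def using Dsub[OF v] .
  have UT: "U ` T = B0" using bij_top[OF p] unfolding T_def by (simp add: bij_betw_def)
  have UA: "U ` A = B"
  proof
    show "U ` A \<subseteq> B" unfolding A_def by blast
    show "B \<subseteq> U ` A"
    proof
      fix b assume "b \<in> B"
      then have "b \<in> U ` T" using UT B(2) by blast
      then obtain t where "t \<in> T" "b = U t" by blast
      then show "b \<in> U ` A" unfolding A_def using \<open>b \<in> B\<close> by blast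
    qed
  qed
  have AT: "A \<subseteq> T" unfolding A_def by blast
  have Asets: "A \<in> sets M"
    using iso_sets[OF iso_top[OF p], of A] AT UA B(1) unfolding T_def by blast
  show ?thesis
  proof (cases "T = {}")
    case True
    then have "A = {}" unfolding A_def by simp
    then show ?thesis unfolding T_def[symmetric] A_def[symmetric] by simp
  next
    case False
    then obtain y0 where y0: "y0 \<in> T" by blast
    have jy0: "0 < J y0" using Jpos Tsub y0 by blast
    have r1': "J x \<le> (1 + c) * J y0" if "x \<in> T" for x
      using Jratio[OF v] that y0 unfolding T_def c_def by blast
    have r2': "J y0 \<le> (1 + c) * J x" if "x \<in> T" for x
      using Jratio[OF v] that y0 unfolding T_def c_def by blast
    have e1: "emeasure M A \<le> ennreal ((1 + c) * J y0) * emeasure M B"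
    proof -
      have "emeasure M A = (\<integral>\<^sup>+ x. indicator A x \<partial>M)"
        using Asets by simp
      also have "\<dots> \<le> (\<integral>\<^sup>+ x. ennreal ((1 + c) * J y0) * (ennreal (1 / J x) * indicator A x) \<partial>M)"
      proof (rule nn_integral_mono)
        fix x assume x: "x \<in> space M"
        show "indicator A x \<le> ennreal ((1 + c) * J y0) * (ennreal (1 / J x) * indicator A x)"
        proof (cases "x \<in> A")
          case True
          then have xT: "x \<in> T" using AT by blast
          have jx: "0 < J x" using Jpos x by blast
          have "1 \<le> (1 + c) * J y0 * (1 / J x)" using r1'[OF xT] jx by (simp add: field_simps)
          then have "ennreal 1 \<le> ennreal ((1 + c) * J y0 * (1 / J x))"
            by (rule ennreal_leI)
          also have "\<dots> = ennreal ((1 + c) * J y0) * ennreal (1 / J x)"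
            by (rule ennreal_mult'') (use jx in simp)
          finally show ?thesis using True by (simp add: mult.assoc)
        qed simp
      qed
      also have "\<dots> = ennreal ((1 + c) * J y0) * (\<integral>\<^sup>+ x. ennreal (1 / J x) * indicator A x \<partial>M)"
        by (rule nn_integral_cmult) (use Asets in measurable)
      also have "(\<integral>\<^sup>+ x. ennreal (1 / J x) * indicator A x \<partial>M) = emeasure M (U ` A)"
        using jac[OF v AT[unfolded T_def] Asets] by simp
      finally show ?thesis using UA by simp
    qed
    have e2: "emeasure M B0 \<le> ennreal ((1 + c) / J y0) * emeasure M T"
    proof -
      have "emeasure M B0 = emeasure M (U ` T)" using UT by simp
      also have "\<dots> = (\<integral>\<^sup>+ x. ennreal (1 / J x) * indicator T x \<partial>M)"
        using jac[OF v _ Tsets] unfolding T_def by simp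
      also have "\<dots> \<le> (\<integral>\<^sup>+ x. ennreal ((1 + c) / J y0) * indicator T x \<partial>M)"
      proof (rule nn_integral_mono)
        fix x assume x: "x \<in> space M"
        show "ennreal (1 / J x) * indicator T x \<le> ennreal ((1 + c) / J y0) * indicator T x"
        proof (cases "x \<in> T")
          case True
          have jx: "0 < J x" using Jpos x by blast
          have "1 / J x \<le> (1 + c) / J y0" using r2'[OF True] jx jy0 by (simp add: field_simps)
          then show ?thesis using True by (simp add: ennreal_leI)
        qed simp
      qed
      also have "\<dots> = ennreal ((1 + c) / J y0) * emeasure M T"
        using Tsets by (simp add: nn_integral_cmult_indicator)
      finally show ?thesis .
    qed
    have m1: "measure M A \<le> (1 + c) * J y0 * measure M B"
    proof -
      have "ennreal (measure M A) \<le> ennreal ((1 + c) * J y0 * measure M B)"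
        using e1 c0 jy0 by (simp add: emeq ennreal_mult'')
      then show ?thesis using c0 jy0 by (simp add: ennreal_le_iff)
    qed
    have m2: "measure M B0 \<le> (1 + c) / J y0 * measure M T"
    proof -
      have eq: "ennreal ((1 + c) / J y0) * ennreal (measure M T) = ennreal ((1 + c) / J y0 * measure M T)"
        by (rule ennreal_mult''[symmetric]) simp
      have "ennreal (measure M B0) \<le> ennreal ((1 + c) / J y0 * measure M T)"
        using e2 unfolding emeq[of B0] emeq[of T] eq .
      then show ?thesis using c0 jy0 by (subst (asm) ennreal_le_iff) auto
    qed
    have "measure M A * measure M B0 \<le> ((1 + c) * J y0 * measure M B) * ((1 + c) / J y0 * measure M T)"
      by (rule mult_mono[OF m1 m2]) (use c0 jy0 in auto)
    also have "\<dots> = (1 + c)^2 * measure M B * measure M T"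
      using jy0 by (simp add: field_simps power2_eq_square)
    finally show ?thesis unfolding A_def T_def c_def .
  qed
qed

lemma top_disj: "p \<in> P \<Longrightarrow> q \<in> P \<Longrightarrow> p \<noteq> q \<Longrightarrow> D (r p - 1) p \<inter> D (r q - 1) q = {}"
  by (rule Ddisj[OF valid_top valid_top]) auto

lemma em_tops: "Q \<subseteq> P \<Longrightarrow> (\<And>p. p \<in> Q \<Longrightarrow> X p \<subseteq> D (r p - 1) p) \<Longrightarrow> (\<And>p. p \<in> Q \<Longrightarrow> X p \<in> sets M)
  \<Longrightarrow> emeasure M (\<Union>p\<in>Q. X p) = (\<integral>\<^sup>+ p. ennreal (measure M (X p)) \<partial>count_space Q)"
proof -
  assume Q: "Q \<subseteq> P" and X: "\<And>p. p \<in> Q \<Longrightarrow> X p \<subseteq> D (r p - 1) p" and Xs: "\<And>p. p \<in> Q \<Longrightarrow> X p \<in> sets M"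
  have dj: "disjoint_family_on X Q"
    unfolding disjoint_family_on_def
  proof (intro ballI impI)
    fix p q assume "p \<in> Q" "q \<in> Q" "p \<noteq> q"
    then have "D (r p - 1) p \<inter> D (r q - 1) q = {}" using top_disj Q by blast
    then show "X p \<inter> X q = {}" using X \<open>p \<in> Q\<close> \<open>q \<in> Q\<close> by blast
  qed
  have "emeasure M (\<Union>p\<in>Q. X p) = (\<integral>\<^sup>+ p. emeasure M (X p) \<partial>count_space Q)"
    by (rule emeasure_UN_countable[OF Xs countable_subset[OF Q cntP] dj])
  then show ?thesis by (simp add: emeq)
qed

lemma em_lev: "emeasure M (lev n) = (\<integral>\<^sup>+ p. ennreal (measure M (D n p)) \<partial>count_space {p \<in> P. n < r p})"
proof -
  let ?Q = "{p \<in> P. n < r p}"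
  have dj: "disjoint_family_on (D n) ?Q"
    unfolding disjoint_family_on_def
  proof (intro ballI impI)
    fix p q assume "p \<in> ?Q" "q \<in> ?Q" "p \<noteq> q"
    then show "D n p \<inter> D n q = {}" by (intro Ddisj) (auto simp: valid_piece_def)
  qed
  have Xs: "\<And>p. p \<in> ?Q \<Longrightarrow> D n p \<in> sets M" by (rule Dsets) (simp add: valid_piece_def)
  have "emeasure M (lev n) = (\<integral>\<^sup>+ p. emeasure M (D n p) \<partial>count_space ?Q)"
    unfolding tower_level_def
    by (rule emeasure_UN_countable[OF Xs countable_subset[OF _ cntP] dj]) auto
  then show ?thesis by (simp add: emeq)
qed

lemma tail_tops: "measure M (tops {p \<in> P. n < r p}) = measure M (lev n)"
proof -
  let ?Q = "{p \<in> P. n < r p}"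
  have Xs2: "\<And>p. p \<in> ?Q \<Longrightarrow> D (r p - 1) p \<in> sets M"
    using Dsets[OF valid_top] by blast
  have "emeasure M (tops ?Q) = (\<integral>\<^sup>+ p. ennreal (measure M (D (r p - 1) p)) \<partial>count_space ?Q)"
    unfolding tops_def by (rule em_tops[OF _ _ Xs2]) auto
  also have "\<dots> = (\<integral>\<^sup>+ p. ennreal (measure M (D n p)) \<partial>count_space ?Q)"
  proof (rule nn_integral_cong)
    fix p assume "p \<in> space (count_space ?Q)"
    then have p: "p \<in> P" "n < r p" by auto
    have "measure M (D (r p - 1) p) = measure M (D 0 p)" by (rule colmeas) (use p in auto)
    also have "\<dots> = measure M (D n p)" by (rule colmeas[symmetric]) (use p in auto)
    finally show "ennreal (measure M (D (r p - 1) p)) = ennreal (measure M (D n p))" by simp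
  qed
  also have "\<dots> = emeasure M (lev n)" by (rule em_lev[symmetric])
  finally show ?thesis by (simp add: emeq)
qed

lemma jac_sum:
  assumes Q: "Q \<subseteq> P" and B: "B \<in> sets M" "B \<subseteq> B0"
  shows "measure M (tops Q \<inter> U -` B) * measure M B0 \<le> (1 + \<bar>Cd\<bar>)^2 * measure M B * measure M (tops Q)"
proof -
  define K where "K = (1 + \<bar>Cd\<bar>)^2 * measure M B"
  have K0: "0 \<le> K" unfolding K_def by simp
  have Us: "U -` B \<inter> space M \<in> sets M" using Umeas B(1) by (auto simp: measurable_def)
  have eqA: "tops Q \<inter> U -` B = (\<Union>p\<in>Q. D (r p - 1) p \<inter> (U -` B \<inter> space M))"
    unfolding tops_def using top_sub[OF Q] unfolding tops_def by blast
  have Xs: "\<And>p. p \<in> Q \<Longrightarrow> D (r p - 1) p \<inter> (U -` B \<inter> space M) \<in> sets M"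
    using Dsets[OF valid_top] Us Q by blast
  have Xs2: "\<And>p. p \<in> Q \<Longrightarrow> D (r p - 1) p \<in> sets M"
    using Dsets[OF valid_top] Q by blast
  have e1: "emeasure M (tops Q \<inter> U -` B) = (\<integral>\<^sup>+ p. ennreal (measure M (D (r p - 1) p \<inter> (U -` B \<inter> space M))) \<partial>count_space Q)"
    unfolding eqA by (rule em_tops[OF Q _ Xs]) auto
  have e2: "emeasure M (tops Q) = (\<integral>\<^sup>+ p. ennreal (measure M (D (r p - 1) p)) \<partial>count_space Q)"
    unfolding tops_def by (rule em_tops[OF Q _ Xs2]) auto
  have "ennreal (measure M (tops Q \<inter> U -` B) * measure M B0)
      = emeasure M (tops Q \<inter> U -` B) * ennreal (measure M B0)"
    by (simp add: emeq ennreal_mult'')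
  also have "\<dots> = (\<integral>\<^sup>+ p. ennreal (measure M (D (r p - 1) p \<inter> (U -` B \<inter> space M))) * ennreal (measure M B0) \<partial>count_space Q)"
    unfolding e1 by (rule nn_integral_multc[symmetric]) simp
  also have "\<dots> \<le> (\<integral>\<^sup>+ p. ennreal K * ennreal (measure M (D (r p - 1) p)) \<partial>count_space Q)"
  proof (rule nn_integral_mono)
    fix p assume "p \<in> space (count_space Q)"
    then have p: "p \<in> P" using Q by auto
    have "D (r p - 1) p \<inter> (U -` B \<inter> space M) = D (r p - 1) p \<inter> U -` B"
      using Dsub[OF valid_top[OF p]] by blast
    then have "measure M (D (r p - 1) p \<inter> (U -` B \<inter> space M)) * measure M B0 \<le> K * measure M (D (r p - 1) p)"
      using jac_piece[OF p B] unfolding K_def by simp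
    then have "ennreal (measure M (D (r p - 1) p \<inter> (U -` B \<inter> space M)) * measure M B0) \<le> ennreal (K * measure M (D (r p - 1) p))"
      by (rule ennreal_leI)
    then show "ennreal (measure M (D (r p - 1) p \<inter> (U -` B \<inter> space M))) * ennreal (measure M B0) \<le> ennreal K * ennreal (measure M (D (r p - 1) p))"
      using K0 by (simp add: ennreal_mult'')
  qed
  also have "\<dots> = ennreal K * emeasure M (tops Q)"
    unfolding e2 by (rule nn_integral_cmult) simp
  also have "\<dots> = ennreal (K * measure M (tops Q))"
    by (simp add: emeq ennreal_mult'')
  finally have "ennreal (measure M (tops Q \<inter> U -` B) * measure M B0) \<le> ennreal (K * measure M (tops Q))" .
  then show ?thesis using K0 unfolding K_def by (subst (asm) ennreal_le_iff) (auto simp: mult.assoc)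
qed

end


context yt begin

sublocale prob_space M by (rule ps)

lemma Un_meas[measurable]: "(U ^^ k) \<in> M \<rightarrow>\<^sub>M M"
  by (rule measurable_compose_n[OF Umeas])

lemma B0_sets[measurable]: "B0 \<in> sets M" by (rule lev_sets)

lemma psi_prod: "(\<sigma>::real) ^ Psi U B0 n x = (\<Prod>k\<in>{1..n}. if (U ^^ k) x \<in> B0 then \<sigma> else 1)"
proof -
  have "(\<Prod>k\<in>{1..n}. if (U ^^ k) x \<in> B0 then \<sigma> else 1)
      = (\<Prod>k\<in>{1..n} \<inter> {k. (U ^^ k) x \<in> B0}. \<sigma>) * (\<Prod>k\<in>{1..n} \<inter> - {k. (U ^^ k) x \<in> B0}. 1)"
    by (rule prod.If_cases) simp
  also have "\<dots> = \<sigma> ^ card ({1..n} \<inter> {k. (U ^^ k) x \<in> B0})" by simp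
  also have "{1..n} \<inter> {k. (U ^^ k) x \<in> B0} = {k \<in> {1..n}. (U ^^ k) x \<in> B0}" by blast
  finally show ?thesis unfolding Psi_def by simp
qed

lemma psi_meas[measurable]: "(\<lambda>x. (\<sigma>::real) ^ Psi U B0 n x) \<in> borel_measurable M"
proof -
  have e: "(\<lambda>x. \<sigma> ^ Psi U B0 n x) = (\<lambda>x. \<Prod>k\<in>{1..n}. if (U ^^ k) x \<in> B0 then \<sigma> else 1)"
    by (rule ext) (rule psi_prod)
  show ?thesis unfolding e by measurable
qed

definition W :: "real \<Rightarrow> nat \<Rightarrow> 'a set \<Rightarrow> real" where
  "W \<sigma> n B = (\<integral>x. indicator B ((U ^^ n) x) * \<sigma> ^ Psi U B0 n x \<partial>M)"

lemma psi_bound: "0 \<le> (\<sigma>::real) \<Longrightarrow> \<sigma> \<le> 1 \<Longrightarrow> 0 \<le> \<sigma> ^ k \<and> \<sigma> ^ k \<le> 1"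
  by (simp add: power_le_one zero_le_power)

lemma W_integrable: "B \<in> sets M \<Longrightarrow> 0 \<le> (\<sigma>::real) \<Longrightarrow> \<sigma> \<le> 1 \<Longrightarrow>
   integrable M (\<lambda>x. indicator B ((U ^^ n) x) * \<sigma> ^ Psi U B0 n x)"
proof -
  assume a: "B \<in> sets M" "0 \<le> \<sigma>" "\<sigma> \<le> 1"
  show ?thesis
  proof (rule integrable_const_bound)
    show "AE x in M. norm (indicator B ((U ^^ n) x) * \<sigma> ^ Psi U B0 n x) \<le> (1::real)"
      using psi_bound[OF a(2,3)] by (auto simp: indicator_def)
    show "(\<lambda>x. indicator B ((U ^^ n) x) * \<sigma> ^ Psi U B0 n x) \<in> borel_measurable M"
      using a(1) by measurable
  qed
qed

lemma W_nonneg: "0 \<le> \<sigma> \<Longrightarrow> 0 \<le> W \<sigma> n B"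
  unfolding W_def by (rule integral_nonneg_AE) (auto simp: indicator_def)

lemma psi_mono: "m < n \<Longrightarrow> (U ^^ n) x \<in> B0 \<Longrightarrow> Suc (Psi U B0 m x) \<le> Psi U B0 n x"
proof -
  assume a: "m < n" "(U ^^ n) x \<in> B0"
  let ?A = "{k \<in> {1..m}. (U ^^ k) x \<in> B0}"
  have "insert n ?A \<subseteq> {k \<in> {1..n}. (U ^^ k) x \<in> B0}" using a by auto
  then have "card (insert n ?A) \<le> card {k \<in> {1..n}. (U ^^ k) x \<in> B0}" by (intro card_mono) auto
  moreover have "card (insert n ?A) = Suc (card ?A)" using a(1) by (intro card_insert_disjoint) auto
  ultimately show ?thesis unfolding Psi_def by simp
qed

lemma psi_pos: "1 \<le> n \<Longrightarrow> (U ^^ n) x \<in> B0 \<Longrightarrow> 1 \<le> Psi U B0 n x"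
  using psi_mono[of 0 n x] by simp

definition G :: "nat \<Rightarrow> 'a set \<Rightarrow> 'a set" where
  "G j B = B0 \<inter> ((U ^^ (j - 1)) -` (tops {p \<in> P. r p = j} \<inter> U -` B) \<inter> space M)"

lemma tU_sets: "Q \<subseteq> P \<Longrightarrow> B \<in> sets M \<Longrightarrow> tops Q \<inter> U -` B \<in> sets M"
proof -
  assume a: "Q \<subseteq> P" "B \<in> sets M"
  have "tops Q \<inter> U -` B = tops Q \<inter> (U -` B \<inter> space M)" using top_sub[OF a(1)] by blast
  moreover have "U -` B \<inter> space M \<in> sets M" using Umeas a(2) by (auto simp: measurable_def)
  ultimately show ?thesis using top_sets[OF a(1)] by simp
qed

lemma G_sets: "B \<in> sets M \<Longrightarrow> G j B \<in> sets M"
proof -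
  assume a: "B \<in> sets M"
  have "tops {p \<in> P. r p = j} \<inter> U -` B \<in> sets M" by (rule tU_sets) (use a in auto)
  then have "(U ^^ (j - 1)) -` (tops {p \<in> P. r p = j} \<inter> U -` B) \<inter> space M \<in> sets M"
    by (rule measurable_sets[OF Un_meas])
  then show ?thesis unfolding G_def by simp
qed

lemma G_sub: "G j B \<subseteq> B0" unfolding G_def by blast

lemma pointwise:
  assumes s: "0 \<le> (\<sigma>::real)" "\<sigma> \<le> 1" and n: "1 \<le> n" and B: "B \<subseteq> B0" and x: "x \<in> space M"
  shows "indicator B ((U ^^ n) x) * \<sigma> ^ Psi U B0 n x
    \<le> (\<Sum>j\<in>{1..n}. \<sigma> * (indicator (G j B) ((U ^^ (n - j)) x) * \<sigma> ^ Psi U B0 (n - j) x))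
       + \<sigma> * indicator (tops {p \<in> P. n < r p} \<inter> U -` B) ((U ^^ (n - 1)) x)"
    (is "?L \<le> ?S + ?T")
proof -
  have Sn: "0 \<le> ?S" using s by (intro sum_nonneg mult_nonneg_nonneg) auto
  have Tn: "0 \<le> ?T" using s by (auto simp: indicator_def)
  show ?thesis
  proof (cases "(U ^^ n) x \<in> B")
    case False
    then have L0: "?L = 0" by simp
    show ?thesis using L0 Sn Tn by linarith
  next
    case True
    define y where "y = (U ^^ (n - 1)) x"
    have ysp: "y \<in> space M" unfolding y_def by (rule Un_space[OF x])
    have nS: "n = Suc (n - 1)" using n by simp
    have Uy: "U y = (U ^^ n) x" unfolding y_def by (subst (2) nS) simp
    have UyB: "U y \<in> B" using Uy True by simp
    then have "U y \<in> B0" using B by blast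
    then obtain p where p: "p \<in> P" "y \<in> D (r p - 1) p" using pre_top[OF ysp] by blast
    have nB0: "(U ^^ n) x \<in> B0" using True B by blast
    have L1: "?L = \<sigma> ^ Psi U B0 n x" using True by simp
    show ?thesis
    proof (cases "n < r p")
      case True
      have "y \<in> tops {p \<in> P. n < r p} \<inter> U -` B"
        unfolding tops_def using p True UyB by blast
      then have T1: "?T = \<sigma>" unfolding y_def by simp
      have "\<sigma> ^ Psi U B0 n x \<le> \<sigma> ^ 1"
        by (rule power_decreasing[OF psi_pos[OF n nB0] s])
      then have "\<sigma> ^ Psi U B0 n x \<le> \<sigma>" by simp
      then show ?thesis using L1 T1 Sn by linarith
    next
      case False
      define j where "j = r p"
      have j1: "1 \<le> j" unfolding j_def using r1[OF p(1)] .
      have jn: "j \<le> n" unfolding j_def using False by simp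
      define w where "w = (U ^^ (n - j)) x"
      have wsp: "w \<in> space M" unfolding w_def by (rule Un_space[OF x])
      have wy: "(U ^^ (j - 1)) w = y"
      proof -
        have "(U ^^ (j - 1)) w = (U ^^ (j - 1 + (n - j))) x" unfolding w_def by (simp add: funpow_add)
        also have "j - 1 + (n - j) = n - 1" using j1 jn by simp
        finally show ?thesis unfolding y_def .
      qed
      have "y \<in> lev (j - 1)"
        unfolding tower_level_def j_def using p r1[OF p(1)] by auto
      then have ylev: "(U ^^ (j - 1)) w \<in> lev (0 + (j - 1))" using wy by simp
      have wB0: "w \<in> B0" using back_iter[OF wsp ylev] .
      have ytop: "y \<in> tops {p \<in> P. r p = j} \<inter> U -` B"
        unfolding tops_def using p UyB j_def by blast
      have wG: "w \<in> G j B" unfolding G_def using wB0 wy ytop wsp by blast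
      have "\<sigma> ^ Psi U B0 n x \<le> \<sigma> ^ Suc (Psi U B0 (n - j) x)"
        by (rule power_decreasing[OF psi_mono[OF _ nB0] s]) (use j1 jn in simp)
      also have "\<dots> = \<sigma> * (indicator (G j B) ((U ^^ (n - j)) x) * \<sigma> ^ Psi U B0 (n - j) x)"
        using wG unfolding w_def by simp
      also have "\<dots> \<le> ?S"
        by (rule member_le_sum[where f = "\<lambda>j. \<sigma> * (indicator (G j B) ((U ^^ (n - j)) x) * \<sigma> ^ Psi U B0 (n - j) x)"])
           (use j1 jn s in \<open>auto simp: indicator_def\<close>)
      finally have "\<sigma> ^ Psi U B0 n x \<le> ?S" .
      then show ?thesis using L1 Tn by linarith
    qed
  qed
qed

end



lemma geo0: "(\<Sum>j\<in>{1..n}. (q::real) ^ (j - 1)) * (1 - q) = 1 - q ^ n"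
proof (induction n)
  case 0 then show ?case by simp
next
  case (Suc n)
  have e: "(\<Sum>j\<in>{1..Suc n}. q ^ (j - 1)) = (\<Sum>j\<in>{1..n}. q ^ (j - 1)) + q ^ n"
    by (simp add: sum.cl_ivl_Suc)
  have "(\<Sum>j\<in>{1..Suc n}. q ^ (j - 1)) * (1 - q) = (\<Sum>j\<in>{1..n}. q ^ (j - 1)) * (1 - q) + q ^ n * (1 - q)"
    unfolding e by (rule distrib_right)
  also have "\<dots> = (1 - q ^ n) + q ^ n * (1 - q)" using Suc.IH by simp
  also have "\<dots> = 1 - q ^ Suc n" by (simp add: algebra_simps)
  finally show ?case .
qed

lemma geo1: "0 \<le> (q::real) \<Longrightarrow> q < 1 \<Longrightarrow> (\<Sum>j\<in>{1..n}. q ^ (j - 1)) \<le> 1 / (1 - q)"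
proof -
  assume q: "0 \<le> q" "q < 1"
  have "(\<Sum>j\<in>{1..n}. q ^ (j - 1)) * (1 - q) \<le> 1" using geo0[where q=q and n=n] q by simp
  then show ?thesis using q by (simp add: pos_le_divide_eq)
qed

lemma geo:
  fixes z \<rho> :: real
  assumes z: "0 < z" and r: "0 \<le> \<rho>" "\<rho> * z < 1"
  shows "(\<Sum>j\<in>{1..n}. (1/z)^(n-j) * \<rho>^(j-1)) \<le> (1/z)^n * (z / (1 - \<rho> * z))"
proof -
  have tm: "(1/z)^(n-j) * \<rho>^(j-1) = (1/z)^n * z * (\<rho> * z)^(j-1)" if j: "j \<in> {1..n}" for j
  proof -
    obtain i where i: "j = Suc i" using j by (cases j) auto
    obtain m where m: "n = m + Suc i" using j i by (metis atLeastAtMost_iff le_add_diff_inverse2)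
    have "(1/z)^n * z * (\<rho> * z)^(j-1) = (1/z)^m * \<rho>^i * (((1/z)^(Suc i)) * z ^ (Suc i))"
      unfolding m i by (simp add: power_add power_mult_distrib algebra_simps)
    also have "((1/z)^(Suc i)) * z ^ (Suc i) = 1" using z by (simp add: power_one_over field_simps)
    finally show ?thesis unfolding m i by simp
  qed
  have "(\<Sum>j\<in>{1..n}. (1/z)^(n-j) * \<rho>^(j-1)) = (\<Sum>j\<in>{1..n}. (1/z)^n * z * (\<rho> * z)^(j-1))"
    by (rule sum.cong) (use tm in auto)
  also have "\<dots> = (1/z)^n * z * (\<Sum>j\<in>{1..n}. (\<rho> * z)^(j-1))"
    by (simp add: sum_distrib_left)
  also have "\<dots> \<le> (1/z)^n * z * (1 / (1 - \<rho> * z))"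
    by (rule mult_left_mono[OF geo1]) (use z r in auto)
  finally show ?thesis by simp
qed

context yt begin

lemma ind_pre: "S \<in> sets M \<Longrightarrow> (\<integral>x. indicator S ((U ^^ k) x) \<partial>M) = measure M S"
proof -
  assume S: "S \<in> sets M"
  have "(\<integral>x. indicator S ((U ^^ k) x) \<partial>M) = (\<integral>x. indicator ((U ^^ k) -` S \<inter> space M) x \<partial>M)"
    by (rule Bochner_Integration.integral_cong) (auto simp: indicator_def)
  also have "\<dots> = measure M ((U ^^ k) -` S \<inter> space M)"
    unfolding Bochner_Integration.integral_indicator by (simp add: Int_assoc)
  also have "\<dots> = measure M S" by (rule mpn_m[OF S])
  finally show ?thesis .
qed

lemma ind_pre_int: "S \<in> sets M \<Longrightarrow> integrable M (\<lambda>x. indicator S ((U ^^ k) x) :: real)"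
proof -
  assume S: "S \<in> sets M"
  show ?thesis
  proof (rule integrable_const_bound)
    show "AE x in M. norm (indicator S ((U ^^ k) x) :: real) \<le> 1" by (auto simp: indicator_def)
    show "(\<lambda>x. indicator S ((U ^^ k) x) :: real) \<in> borel_measurable M" using S by measurable
  qed
qed

lemma rec_int:
  assumes s: "0 \<le> (\<sigma>::real)" "\<sigma> \<le> 1" and n: "1 \<le> n" and B: "B \<in> sets M" "B \<subseteq> B0"
  shows "W \<sigma> n B \<le> (\<Sum>j\<in>{1..n}. \<sigma> * W \<sigma> (n - j) (G j B))
            + \<sigma> * measure M (tops {p \<in> P. n < r p} \<inter> U -` B)"
proof -
  define S where "S = tops {p \<in> P. n < r p} \<inter> U -` B"
  have Ss: "S \<in> sets M" unfolding S_def by (rule tU_sets) (use B in auto)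
  have i1: "integrable M (\<lambda>x. indicator B ((U ^^ n) x) * \<sigma> ^ Psi U B0 n x)"
    by (rule W_integrable[OF B(1) s])
  have i2: "integrable M (\<lambda>x. indicator (G j B) ((U ^^ (n - j)) x) * \<sigma> ^ Psi U B0 (n - j) x)" for j
    by (rule W_integrable[OF G_sets[OF B(1)] s])
  have i3: "integrable M (\<lambda>x. indicator S ((U ^^ (n - 1)) x) :: real)" by (rule ind_pre_int[OF Ss])
  have "W \<sigma> n B \<le> (\<integral>x. (\<Sum>j\<in>{1..n}. \<sigma> * (indicator (G j B) ((U ^^ (n - j)) x) * \<sigma> ^ Psi U B0 (n - j) x))
       + \<sigma> * indicator S ((U ^^ (n - 1)) x) \<partial>M)"
    unfolding W_def S_def
    by (rule integral_mono[OF i1]) (use i2 i3 pointwise[OF s n B(2)] in \<open>auto simp: S_def\<close>)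
  also have "\<dots> = (\<Sum>j\<in>{1..n}. \<sigma> * W \<sigma> (n - j) (G j B)) + \<sigma> * measure M S"
  proof -
    have "(\<integral>x. (\<Sum>j\<in>{1..n}. \<sigma> * (indicator (G j B) ((U ^^ (n - j)) x) * \<sigma> ^ Psi U B0 (n - j) x))
       + \<sigma> * indicator S ((U ^^ (n - 1)) x) \<partial>M)
      = (\<integral>x. (\<Sum>j\<in>{1..n}. \<sigma> * (indicator (G j B) ((U ^^ (n - j)) x) * \<sigma> ^ Psi U B0 (n - j) x)) \<partial>M)
       + (\<integral>x. \<sigma> * indicator S ((U ^^ (n - 1)) x) \<partial>M)"
      by (rule Bochner_Integration.integral_add) (use i2 i3 in auto)
    also have "(\<integral>x. (\<Sum>j\<in>{1..n}. \<sigma> * (indicator (G j B) ((U ^^ (n - j)) x) * \<sigma> ^ Psi U B0 (n - j) x)) \<partial>M)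
       = (\<Sum>j\<in>{1..n}. (\<integral>x. \<sigma> * (indicator (G j B) ((U ^^ (n - j)) x) * \<sigma> ^ Psi U B0 (n - j) x) \<partial>M))"
      by (rule Bochner_Integration.integral_sum) (use i2 in auto)
    also have "\<dots> = (\<Sum>j\<in>{1..n}. \<sigma> * W \<sigma> (n - j) (G j B))"
      unfolding W_def by simp
    also have "(\<integral>x. \<sigma> * indicator S ((U ^^ (n - 1)) x) \<partial>M) = \<sigma> * measure M S"
      using ind_pre[OF Ss] by simp
    finally show ?thesis .
  qed
  finally show ?thesis unfolding S_def .
qed

end


context yt begin

lemma W0: "B \<in> sets M \<Longrightarrow> W \<sigma> 0 B = measure M B"
proof -
  assume B: "B \<in> sets M"
  have p0: "Psi U B0 0 x = 0" for x by (simp add: Psi_def)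
  have "W \<sigma> 0 B = (\<integral>x. indicator B x \<partial>M)" unfolding W_def p0 by simp
  also have "\<dots> = measure M B"
    unfolding Bochner_Integration.integral_indicator using sets.sets_into_space[OF B]
    by (simp add: Int_absorb2)
  finally show ?thesis .
qed

lemma tops_lev: "1 \<le> j \<Longrightarrow> tops {p \<in> P. r p = j} \<subseteq> lev (j - 1)"
  unfolding tops_def tower_level_def by auto

lemma Wbound:
  fixes \<sigma> z \<rho> C :: real
  assumes s: "0 \<le> \<sigma>" "\<sigma> \<le> 1" and z: "0 < z" and r: "0 \<le> \<rho>" "\<rho> * z < 1" and C: "0 \<le> C"
    and lb: "\<And>k. measure M (lev k) \<le> C * \<rho> ^ k" and pos: "0 < measure M B0"
    and small: "\<sigma> * ((1 + \<bar>Cd\<bar>)^2 / measure M B0) * C * (z / (1 - \<rho> * z) + 1) \<le> 1"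
  shows "B \<in> sets M \<Longrightarrow> B \<subseteq> B0 \<Longrightarrow> W \<sigma> n B \<le> (1/z)^n * measure M B"
proof (induction n arbitrary: B rule: less_induct)
  case (less n B)
  show ?case
  proof (cases "n = 0")
    case True
    then show ?thesis using W0[OF less.prems(1)] by simp
  next
    case False
    then have n1: "1 \<le> n" by simp
    define K where "K = (1 + \<bar>Cd\<bar>)^2 / measure M B0"
    define a where "a = 1 / z"
    have K0: "0 \<le> K" unfolding K_def using pos by simp
    have a0: "0 \<le> a" unfolding a_def using z by simp
    have mB: "0 \<le> measure M B" by simp
    have ra: "\<rho> \<le> a" unfolding a_def using r z by (simp add: pos_le_divide_eq mult.commute)
    have jacK: "measure M (tops Q \<inter> U -` B) \<le> K * measure M B * measure M (tops Q)" if Q: "Q \<subseteq> P" for Q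
    proof -
      have "measure M (tops Q \<inter> U -` B) * measure M B0 \<le> (1 + \<bar>Cd\<bar>)^2 * measure M B * measure M (tops Q)"
        by (rule jac_sum[OF Q less.prems])
      then show ?thesis unfolding K_def using pos by (simp add: pos_le_divide_eq field_simps)
    qed
    have Gb: "measure M (G j B) \<le> K * measure M B * (C * \<rho> ^ (j - 1))" if j: "j \<in> {1..n}" for j
    proof -
      define X where "X = tops {p \<in> P. r p = j} \<inter> U -` B"
      have Xs: "X \<in> sets M" unfolding X_def by (rule tU_sets) (use less.prems in auto)
      have Ps: "(U ^^ (j - 1)) -` X \<inter> space M \<in> sets M" by (rule measurable_sets[OF Un_meas Xs])
      have "measure M (G j B) \<le> measure M ((U ^^ (j - 1)) -` X \<inter> space M)"
        by (rule finite_measure_mono[OF _ Ps]) (auto simp: G_def X_def)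
      also have "\<dots> = measure M X" by (rule mpn_m[OF Xs])
      also have "\<dots> \<le> K * measure M B * measure M (tops {p \<in> P. r p = j})"
        unfolding X_def by (rule jacK) auto
      also have "\<dots> \<le> K * measure M B * measure M (lev (j - 1))"
        by (rule mult_left_mono[OF finite_measure_mono[OF tops_lev lev_sets]]) (use j K0 in auto)
      also have "\<dots> \<le> K * measure M B * (C * \<rho> ^ (j - 1))"
        by (rule mult_left_mono[OF lb]) (use K0 in auto)
      finally show ?thesis .
    qed
    have Sb: "measure M (tops {p \<in> P. n < r p} \<inter> U -` B) \<le> K * measure M B * (C * \<rho> ^ n)"
    proof -
      have "measure M (tops {p \<in> P. n < r p} \<inter> U -` B) \<le> K * measure M B * measure M (tops {p \<in> P. n < r p})"
        by (rule jacK) auto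
      also have "\<dots> = K * measure M B * measure M (lev n)" by (simp add: tail_tops)
      also have "\<dots> \<le> K * measure M B * (C * \<rho> ^ n)"
        by (rule mult_left_mono[OF lb]) (use K0 in auto)
      finally show ?thesis .
    qed
    have IH: "W \<sigma> (n - j) (G j B) \<le> a ^ (n - j) * measure M (G j B)" if j: "j \<in> {1..n}" for j
      unfolding a_def by (rule less.IH) (use j G_sets[OF less.prems(1)] G_sub in auto)
    define E where "E = \<sigma> * K * C * measure M B"
    have E0: "0 \<le> E" unfolding E_def using s K0 C by simp
    have "W \<sigma> n B \<le> (\<Sum>j\<in>{1..n}. \<sigma> * W \<sigma> (n - j) (G j B)) + \<sigma> * measure M (tops {p \<in> P. n < r p} \<inter> U -` B)"
      by (rule rec_int[OF s n1 less.prems])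
    also have "\<dots> \<le> (\<Sum>j\<in>{1..n}. \<sigma> * (a ^ (n - j) * (K * measure M B * (C * \<rho> ^ (j - 1)))))
                   + \<sigma> * (K * measure M B * (C * \<rho> ^ n))"
    proof (rule add_mono[OF sum_mono mult_left_mono[OF Sb s(1)]])
      fix j assume j: "j \<in> {1..n}"
      have "W \<sigma> (n - j) (G j B) \<le> a ^ (n - j) * (K * measure M B * (C * \<rho> ^ (j - 1)))"
        using IH[OF j] mult_left_mono[OF Gb[OF j], of "a ^ (n - j)"] a0 by simp
      then show "\<sigma> * W \<sigma> (n - j) (G j B) \<le> \<sigma> * (a ^ (n - j) * (K * measure M B * (C * \<rho> ^ (j - 1))))"
        by (rule mult_left_mono[OF _ s(1)])
    qed
    also have "\<dots> = E * ((\<Sum>j\<in>{1..n}. a ^ (n - j) * \<rho> ^ (j - 1)) + \<rho> ^ n)"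
      unfolding E_def by (simp add: sum_distrib_left distrib_left mult.assoc mult.left_commute)
    also have "\<dots> \<le> E * (a ^ n * (z / (1 - \<rho> * z)) + a ^ n)"
    proof (rule mult_left_mono[OF add_mono E0])
      show "(\<Sum>j\<in>{1..n}. a ^ (n - j) * \<rho> ^ (j - 1)) \<le> a ^ n * (z / (1 - \<rho> * z))"
        unfolding a_def by (rule geo[OF z r])
      show "\<rho> ^ n \<le> a ^ n" by (rule power_mono[OF ra r(1)])
    qed
    also have "\<dots> = a ^ n * measure M B * (\<sigma> * K * C * (z / (1 - \<rho> * z) + 1))"
      unfolding E_def by (simp add: algebra_simps)
    also have "\<dots> \<le> a ^ n * measure M B * 1"
      by (rule mult_left_mono) (use small a0 in \<open>auto simp: K_def\<close>)
    finally show ?thesis unfolding a_def by simp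
  qed
qed

end



lemma split_bound:
  fixes \<tau> \<theta>1 L :: real and m k n :: nat
  assumes t: "0 \<le> \<tau>" "\<tau> \<le> 1" and th: "0 \<le> \<theta>1" "\<theta>1 \<le> 1" "\<theta>1 ^ m = \<tau>" and L: "1 \<le> L"
  shows "\<tau> ^ k \<le> \<theta>1 ^ n + L ^ n * ((1 / L) ^ m) ^ k"
proof (cases "n \<le> m * k")
  case True
  have "\<tau> ^ k = \<theta>1 ^ (m * k)" using th(3) by (simp add: power_mult)
  also have "\<dots> \<le> \<theta>1 ^ n" by (rule power_decreasing[OF True th(1,2)])
  finally show ?thesis using L by (simp add: add_increasing2)
next
  case False
  have L0: "0 < L" using L by simp
  have "L ^ n * ((1 / L) ^ m) ^ k = L ^ (n - m * k) * (L ^ (m * k) * (1 / L) ^ (m * k))"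
  proof -
    have "n = (n - m * k) + m * k" using False by simp
    then have "L ^ n = L ^ (n - m * k) * L ^ (m * k)" by (metis power_add)
    then show ?thesis by (simp add: power_mult mult.assoc)
  qed
  also have "L ^ (m * k) * (1 / L) ^ (m * k) = 1" using L0 by (simp add: power_one_over)
  finally have e: "L ^ n * ((1 / L) ^ m) ^ k = L ^ (n - m * k)" by simp
  have "\<tau> ^ k \<le> 1" using t by (simp add: power_le_one)
  also have "1 \<le> L ^ (n - m * k)" using L by (rule one_le_power)
  finally show ?thesis using e th by (simp add: add_increasing)
qed

theorem lemmaA2:
  fixes M :: "'a measure" and U :: "'a \<Rightarrow> 'a" and P :: "nat set" and r :: "nat \<Rightarrow> nat"
    and D :: "nat \<Rightarrow> nat \<Rightarrow> 'a set" and J :: "'a \<Rightarrow> real" and Cd \<beta> \<rho> \<tau> :: real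
  assumes tower: "expanding_young_tower M U P r D J Cd \<beta>"
    and rho: "0 \<le> \<rho>" "\<rho> < 1"
    and tail: "(\<lambda>n. measure M (tower_level P r D n)) \<in> O(\<lambda>n. \<rho> ^ n)"
    and tau: "0 \<le> \<tau>" "\<tau> < 1"
  shows "\<exists>C \<theta>. 0 < C \<and> 0 < \<theta> \<and> \<theta> < 1 \<and>
    (\<forall>n. set_lebesgue_integral M ((U ^^ n) -` tower_level P r D 0 \<inter> space M)
            (\<lambda>x. \<tau> ^ Psi U (tower_level P r D 0) n x) \<le> C * \<theta> ^ n)"
proof -
  interpret yt M U P r D J Cd \<beta> using tower by (rule yt.intro)
  have Ieq: "set_lebesgue_integral M ((U ^^ n) -` B0 \<inter> space M) (\<lambda>x. s ^ Psi U B0 n x) = W s n B0" for n s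
    unfolding set_lebesgue_integral_def W_def
    by (rule Bochner_Integration.integral_cong) (auto simp: indicator_def)
  show ?thesis
  proof (cases "measure M B0 = 0")
    case True
    have W0': "W \<tau> n B0 \<le> 0" for n
    proof -
      have "W \<tau> n B0 \<le> (\<integral>x. indicator B0 ((U ^^ n) x) \<partial>M)"
        unfolding W_def
      proof (rule integral_mono[OF W_integrable[OF B0_sets] ind_pre_int[OF B0_sets]])
        fix x show "indicator B0 ((U ^^ n) x) * \<tau> ^ Psi U B0 n x \<le> (indicator B0 ((U ^^ n) x) :: real)"
          using tau by (auto simp: indicator_def power_le_one)
      qed (use tau in auto)
      also have "\<dots> = 0" using ind_pre[OF B0_sets] True by simp
      finally show ?thesis .
    qed
    have b: "W \<tau> n B0 \<le> 1 * (1/2::real) ^ n" for n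
    proof -
      have "0 \<le> (1/2::real) ^ n" by simp
      then show ?thesis using W0'[of n] by linarith
    qed
    show ?thesis unfolding Ieq
      by (rule exI[of _ "1::real"], rule exI[of _ "1/2::real"]) (use b in auto)
  next
    case False
    then have pos: "0 < measure M B0" using measure_nonneg[of M B0] by linarith
    obtain c where c: "0 < c" "eventually (\<lambda>k. norm (measure M (lev k)) \<le> c * norm (\<rho> ^ k)) sequentially"
      using landau_o.bigE[OF tail] by blast
    then obtain N where N: "\<And>k. N \<le> k \<Longrightarrow> norm (measure M (lev k)) \<le> c * norm (\<rho> ^ k)"
      by (auto simp: eventually_sequentially)
    define \<rho>' where "\<rho>' = max \<rho> (1/2)"
    have r'0: "0 < \<rho>'" "\<rho>' < 1" "\<rho> \<le> \<rho>'" unfolding \<rho>'_def using rho by auto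
    define C1 where "C1 = c + (1 / \<rho>') ^ N"
    have C1pos: "0 < C1" unfolding C1_def using c r'0 by (simp add: add_pos_nonneg)
    have lb: "measure M (lev k) \<le> C1 * \<rho>' ^ k" for k
    proof (cases "N \<le> k")
      case True
      have "measure M (lev k) \<le> c * \<rho> ^ k" using N[OF True] rho by simp
      also have "\<dots> \<le> c * \<rho>' ^ k" using c r'0 rho by (intro mult_left_mono power_mono) auto
      also have "\<dots> \<le> C1 * \<rho>' ^ k" unfolding C1_def using r'0 by (intro mult_right_mono) auto
      finally show ?thesis .
    next
      case False
      have "measure M (lev k) \<le> 1" by (rule prob_le_1)
      also have "1 = (1 / \<rho>') ^ N * \<rho>' ^ N" using r'0 by (simp add: power_one_over)
      also have "\<dots> \<le> (1 / \<rho>') ^ N * \<rho>' ^ k"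
        by (rule mult_left_mono[OF power_decreasing]) (use False r'0 in auto)
      also have "\<dots> \<le> C1 * \<rho>' ^ k" unfolding C1_def using c r'0 by (intro mult_right_mono) auto
      finally show ?thesis .
    qed
    define K where "K = (1 + \<bar>Cd\<bar>)^2 / measure M B0"
    have K0: "0 < K" unfolding K_def using pos by (simp add: add_pos_nonneg)
    define z where "z = 2 / (1 + \<rho>')"
    have z0: "0 < z" unfolding z_def using r'0 by simp
    have z1: "1 < z" unfolding z_def using r'0 by simp
    have rz: "\<rho>' * z < 1" unfolding z_def using r'0 by (simp add: field_simps)
    define L where "L = (1 + z) / 2"
    have L1: "1 < L" unfolding L_def using z1 by simp
    have Lz: "L < z" unfolding L_def using z1 by simp
    define Q where "Q = K * C1 * (z / (1 - \<rho>' * z) + 1)"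
    have Q0: "0 < Q" unfolding Q_def using K0 C1pos rz z0 by (intro mult_pos_pos add_pos_pos divide_pos_pos) auto
    obtain m0 where m0: "(1 / L) ^ m0 < 1 / Q"
      using real_arch_pow_inv[of "1 / Q" "1 / L"] Q0 L1 by auto
    define m where "m = Suc m0"
    define \<sigma> where "\<sigma> = (1 / L) ^ m"
    have s0: "0 \<le> \<sigma>" unfolding \<sigma>_def using L1 by simp
    have s1: "\<sigma> \<le> 1" unfolding \<sigma>_def using L1 by (simp add: power_le_one)
    have sQ: "\<sigma> \<le> 1 / Q"
    proof -
      have "\<sigma> \<le> (1 / L) ^ m0" unfolding \<sigma>_def m_def by (rule power_decreasing) (use L1 in auto)
      then show ?thesis using m0 by simp
    qed
    have sQ1: "\<sigma> * Q \<le> 1" using sQ Q0 by (simp add: le_divide_eq)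
    have "\<sigma> * K * C1 * (z / (1 - \<rho>' * z) + 1) = \<sigma> * Q" unfolding Q_def by (simp add: mult.assoc)
    then have small': "\<sigma> * K * C1 * (z / (1 - \<rho>' * z) + 1) \<le> 1" using sQ1 by (simp only:)
    have small: "\<sigma> * ((1 + \<bar>Cd\<bar>)^2 / measure M B0) * C1 * (z / (1 - \<rho>' * z) + 1) \<le> 1"
      using small' unfolding K_def .
    have Wb: "W \<sigma> n B0 \<le> (1 / z) ^ n" for n
    proof -
      have "W \<sigma> n B0 \<le> (1 / z) ^ n * measure M B0"
        by (rule Wbound[OF s0 s1 z0 _ rz _ lb pos small B0_sets]) (use r'0 C1pos in auto)
      also have "\<dots> \<le> (1 / z) ^ n * 1" by (rule mult_left_mono[OF prob_le_1]) (use z0 in simp)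
      finally show ?thesis by simp
    qed
    define \<theta>1 where "\<theta>1 = root m \<tau>"
    have m_pos: "0 < m" unfolding m_def by simp
    have th0: "0 \<le> \<theta>1" unfolding \<theta>1_def using tau(1) by (rule real_root_ge_zero)
    have th1: "\<theta>1 < 1" unfolding \<theta>1_def using tau m_pos by (simp add: real_root_lt_1_iff)
    have thpow: "\<theta>1 ^ m = \<tau>" unfolding \<theta>1_def by (rule real_root_pow_pos2[OF m_pos tau(1)])
    define \<theta> where "\<theta> = max \<theta>1 (L / z)"
    have Lz0: "0 < L / z" using L1 z0 by simp
    have Lz1: "L / z < 1" using Lz z0 by simp
    have th_pos: "0 < \<theta>" unfolding \<theta>_def using Lz0 by simp
    have th_lt: "\<theta> < 1" unfolding \<theta>_def using Lz1 th1 by simp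
    have main: "W \<tau> n B0 \<le> 2 * \<theta> ^ n" for n
    proof -
      have iW: "integrable M (\<lambda>x. indicator B0 ((U ^^ n) x) * \<sigma> ^ Psi U B0 n x)"
        by (rule W_integrable[OF B0_sets s0 s1])
      have "W \<tau> n B0 \<le> (\<integral>x. \<theta>1 ^ n + L ^ n * (indicator B0 ((U ^^ n) x) * \<sigma> ^ Psi U B0 n x) \<partial>M)"
        unfolding W_def
      proof (rule integral_mono[OF W_integrable[OF B0_sets]])
        show "integrable M (\<lambda>x. \<theta>1 ^ n + L ^ n * (indicator B0 ((U ^^ n) x) * \<sigma> ^ Psi U B0 n x))"
          using iW by simp
        fix x
        show "indicator B0 ((U ^^ n) x) * \<tau> ^ Psi U B0 n x
              \<le> \<theta>1 ^ n + L ^ n * (indicator B0 ((U ^^ n) x) * \<sigma> ^ Psi U B0 n x)"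
        proof (cases "(U ^^ n) x \<in> B0")
          case True
          show ?thesis
          proof -
            have b: "\<tau> ^ Psi U B0 n x \<le> \<theta>1 ^ n + L ^ n * ((1 / L) ^ m) ^ Psi U B0 n x"
              by (rule split_bound[where k="Psi U B0 n x" and n=n]) (use tau th0 th1 thpow L1 in auto)
            show ?thesis using True b unfolding \<sigma>_def by simp
          qed
        next
          case False
          then show ?thesis using th0 by simp
        qed
      qed (use tau in auto)
      also have "\<dots> = \<theta>1 ^ n + L ^ n * W \<sigma> n B0"
        unfolding W_def using iW prob_space.prob_space[OF ps] by (simp add: Bochner_Integration.integral_add)
      also have "\<dots> \<le> \<theta>1 ^ n + L ^ n * (1 / z) ^ n"
        using Wb[of n] L1 by (intro add_left_mono mult_left_mono) auto
      also have "L ^ n * (1 / z) ^ n = (L / z) ^ n" by (simp add: power_mult_distrib[symmetric])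
      also have "\<theta>1 ^ n + (L / z) ^ n \<le> \<theta> ^ n + \<theta> ^ n"
        unfolding \<theta>_def by (intro add_mono power_mono) (use th0 Lz0 in auto)
      finally show ?thesis by simp
    qed
    show ?thesis unfolding Ieq
      by (rule exI[of _ 2], rule exI[of _ \<theta>]) (use th_pos th_lt main in auto)
  qed
qed


end
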